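(* Let $\alpha\in\mathbb{C}$ with $\Re(\alpha)>-1/2$. Then for every $n\in\mathbb{N}_0$ the function $p_n(x;\alpha)$ is a polynomial in $x$ of exactly degree $n$. Moreover, for all $n\in\mathbb{N}_0$: (i) $p_{n+1}(x;\alpha)= x^2 p_n''(x;\alpha)-x(2x-1-2\alpha)p_n'(x;\alpha)-\big((2\alpha+1)x-\alpha^2\big)p_n(x;\alpha)$, where primes denote derivatives in $x$; (ii) $(2\alpha+1)\,x\,p_n(x;\alpha+1)=-p_{n+1}(x;\alpha)+\alpha^2 p_n(x;\alpha)$; (iii) $p_n(0;\alpha)=\alpha^{2n}$; (iv) $p_n(x;\alpha)=(-2)^n(\alpha+1/2)_n\,x^n+a_{n-1}(x)$ for some polynomial $a_{n-1}$ of degree at most $n-1$ (with $a_{-1}=0$).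
   Context: Let $\mathcal{A}$ be the Bessel-type differential operator acting on (analytic) functions of $x>0$ by $\mathcal{A}f(x)=-x^2f''(x)-xf'(x)+x^2f(x)$, and let $\mathcal{A}^n$ denote its $n$-th iterate ($\mathcal{A}^0$ = identity). For $\alpha\in\mathbb{C}$ and $n\in\mathbb{N}_0$ define, for $x>0$, $p_n(x;\alpha)=(-1)^n e^{x}x^{-\alpha}\,\mathcal{A}^n\big(e^{-x}x^{\alpha}\big)$. The Pochhammer symbol is $(y)_0=1$, $(y)_n=\prod_{j=0}^{n-1}(y+j)$ for $n\ge1$. *)

theory Defs
  imports "HOL-Analysis.Analysis" "HOL-Computational_Algebra.Polynomial"
begin

text \<open>Functions of the real variable x (meaningful for x > 0) with complex values.
  The Bessel-type operator A f(x) = -x^2 f''(x) - x f'(x) + x^2 f(x).\<close>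
definition bessel_op :: "(real \<Rightarrow> complex) \<Rightarrow> real \<Rightarrow> complex" where
  "bessel_op f = (\<lambda>x.
     - ((complex_of_real x)^2 * vector_derivative (\<lambda>t. vector_derivative f (at t)) (at x))
     - complex_of_real x * vector_derivative f (at x)
     + (complex_of_real x)^2 * f x)"

definition pfun :: "nat \<Rightarrow> complex \<Rightarrow> real \<Rightarrow> complex" where
  "pfun n \<alpha> x = (-1)^n * exp (complex_of_real x) * (complex_of_real x) powr (-\<alpha>)
     * (bessel_op ^^ n) (\<lambda>t. exp (- complex_of_real t) * (complex_of_real t) powr \<alpha>) x"

end

theory Submission
  imports Defs
begin

definition Eb :: "complex \<Rightarrow> complex \<Rightarrow> complex" where
  "Eb \<beta> z = exp (-z) * z powr \<beta>"

definition Tp :: "complex \<Rightarrow> complex poly \<Rightarrow> complex poly" where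
  "Tp \<beta> Q = pCons 0 (pCons 0 (pderiv (pderiv Q))) + smult (2*\<beta>+1) (pCons 0 (pderiv Q))
     - smult 2 (pCons 0 (pCons 0 (pderiv Q))) + smult (\<beta>^2) Q - smult (2*\<beta>+1) (pCons 0 Q)"

lemma pos_notin: "(t::real) > 0 \<Longrightarrow> complex_of_real t \<notin> \<real>\<^sub>\<le>\<^sub>0"
  by (simp add: complex_nonpos_Reals_iff)

lemma E_deriv:
  assumes "z \<notin> \<real>\<^sub>\<le>\<^sub>0"
  shows "(Eb \<beta> has_field_derivative Eb \<beta> z * (\<beta>/z - 1)) (at z)"
proof -
  have z: "z \<noteq> 0" using assms by auto
  have "((\<lambda>z. exp (-z) * z powr \<beta>) has_field_derivative
         exp (-z) * (-1) * z powr \<beta> + exp (-z) * (\<beta> * z powr (\<beta> - 1))) (at z)"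
    by (intro derivative_eq_intros has_field_derivative_powr[OF assms]) (use assms in auto)
  moreover have "z powr (\<beta> - 1) = z powr \<beta> / z" using z by (simp add: powr_diff)
  ultimately show ?thesis unfolding Eb_def[abs_def]
    by (simp add: field_simps z)
qed

lemma H1_deriv:
  assumes "z \<notin> \<real>\<^sub>\<le>\<^sub>0"
  shows "((\<lambda>z. Eb \<beta> z * poly Q z) has_field_derivative
     Eb \<beta> z * (poly (pderiv Q) z + (\<beta>/z - 1) * poly Q z)) (at z)"
proof -
  have "((\<lambda>z. Eb \<beta> z * poly Q z) has_field_derivative
     Eb \<beta> z * (\<beta>/z - 1) * poly Q z + Eb \<beta> z * poly (pderiv Q) z) (at z)"
    using DERIV_mult[OF E_deriv[OF assms] poly_DERIV[of Q z], of \<beta>] by (simp add: mult.commute)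
  then show ?thesis by (simp add: algebra_simps)
qed

lemma H2_deriv:
  assumes "z \<notin> \<real>\<^sub>\<le>\<^sub>0"
  shows "((\<lambda>z. Eb \<beta> z * (poly (pderiv Q) z + (\<beta>/z - 1) * poly Q z)) has_field_derivative
     Eb \<beta> z * ((\<beta>/z-1)*(poly (pderiv Q) z + (\<beta>/z - 1) * poly Q z)
        + poly (pderiv (pderiv Q)) z + (\<beta>/z - 1) * poly (pderiv Q) z - \<beta>/z^2 * poly Q z)) (at z)"
proof -
  have z: "z \<noteq> 0" using assms by auto
  have "((\<lambda>z. poly (pderiv Q) z + (\<beta>/z - 1) * poly Q z) has_field_derivative
      poly (pderiv (pderiv Q)) z + ((- (\<beta> * inverse (z^2))) * poly Q z + (\<beta>/z - 1) * poly (pderiv Q) z)) (at z)"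
    apply (intro derivative_eq_intros poly_DERIV DERIV_mult)
    using z by (auto simp: divide_inverse power2_eq_square)
  from DERIV_mult[OF E_deriv[OF assms] this, of \<beta>]
  show ?thesis by (simp add: algebra_simps divide_inverse power2_eq_square)
qed

lemma vd_local:
  assumes "\<And>t. t > 0 \<Longrightarrow> f t = g t" "(x::real) > 0"
  shows "vector_derivative f (at x) = vector_derivative (g :: real \<Rightarrow> complex) (at x)"
proof -
  have "\<And>D. (f has_vector_derivative D) (at x) \<longleftrightarrow> (g has_vector_derivative D) (at x)"
  proof
    fix D assume "(f has_vector_derivative D) (at x)"
    then show "(g has_vector_derivative D) (at x)"
      by (rule has_vector_derivative_transform_within_open[of _ _ _ "{0<..}"]) (use assms in auto)
  next
    fix D assume "(g has_vector_derivative D) (at x)"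
    then show "(f has_vector_derivative D) (at x)"
      by (rule has_vector_derivative_transform_within_open[of _ _ _ "{0<..}"]) (use assms in auto)
  qed
  then have "(\<lambda>D. (f has_vector_derivative D) (at x)) = (\<lambda>D. (g has_vector_derivative D) (at x))"
    by (intro ext)
  then show ?thesis by (simp only: vector_derivative_def)
qed

lemma bessel_local:
  assumes "\<And>t. t > 0 \<Longrightarrow> f t = g t" "(x::real) > 0"
  shows "bessel_op f x = bessel_op g x"
proof -
  have 1: "vector_derivative f (at t) = vector_derivative g (at t)" if "t > 0" for t
    by (rule vd_local[OF assms(1) that])
  show ?thesis unfolding bessel_op_def
    by (simp only: vd_local[OF 1 assms(2)] 1[OF assms(2)] assms(1)[OF assms(2)])
qed

lemma funpow_local:
  assumes "\<And>t. t > 0 \<Longrightarrow> f t = g t"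
  shows "(x::real) > 0 \<Longrightarrow> (bessel_op ^^ n) f x = (bessel_op ^^ n) g x"
proof (induction n arbitrary: x)
  case 0 then show ?case using assms[OF 0] by (simp only: funpow_0)
next
  case (Suc n) show ?case by (simp only: funpow.simps comp_def) (rule bessel_local[OF Suc.IH Suc.prems])
qed

lemma alg:
  fixes z :: complex assumes z: "z \<noteq> 0"
  shows "- (z^2 * (e * ((b/z-1)*(qb + (b/z - 1) * qa) + qc + (b/z - 1) * qb - b/z^2 * qa)))
     - z * (e * (qb + (b/z - 1) * qa)) + z^2 * (e * qa)
   = - (e * (z*(z*qc) + (2*b+1)*(z*qb) - 2*(z*(z*qb)) + b^2*qa - (2*b+1)*(z*qa)))"
proof -
  define u where "u = b/z - 1"
  have b: "b = z*(u+1)" using z by (simp add: u_def field_simps)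
  have "b/z^2 = (u+1)/z" using z by (simp add: b power2_eq_square)
  then show ?thesis unfolding u_def[symmetric] using z
    by (simp add: b power2_eq_square field_simps)
qed

lemma bess_H:
  assumes x: "(x::real) > 0"
  shows "bessel_op (\<lambda>t. Eb \<beta> (complex_of_real t) * poly Q (complex_of_real t)) x
     = - (Eb \<beta> (complex_of_real x) * poly (Tp \<beta> Q) (complex_of_real x))"
proof -
  let ?f = "\<lambda>t. Eb \<beta> (complex_of_real t) * poly Q (complex_of_real t)"
  let ?H1 = "\<lambda>z. Eb \<beta> z * (poly (pderiv Q) z + (\<beta>/z - 1) * poly Q z)"
  have d1: "vector_derivative ?f (at t) = ?H1 (complex_of_real t)" if "t > 0" for t
    by (rule vector_derivative_at, rule has_vector_derivative_real_field[OF H1_deriv[OF pos_notin[OF that]]])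
  have d2: "vector_derivative (\<lambda>t. vector_derivative ?f (at t)) (at x) =
     vector_derivative (\<lambda>t. ?H1 (complex_of_real t)) (at x)"
    by (rule vd_local[OF d1 x])
  also have "\<dots> = Eb \<beta> (complex_of_real x) * ((\<beta>/complex_of_real x-1)*(poly (pderiv Q) (complex_of_real x) + (\<beta>/complex_of_real x - 1) * poly Q (complex_of_real x))
        + poly (pderiv (pderiv Q)) (complex_of_real x) + (\<beta>/complex_of_real x - 1) * poly (pderiv Q) (complex_of_real x) - \<beta>/(complex_of_real x)^2 * poly Q (complex_of_real x))"
    by (rule vector_derivative_at, rule has_vector_derivative_real_field[OF H2_deriv[OF pos_notin[OF x]]])
  finally have d2': "vector_derivative (\<lambda>t. vector_derivative ?f (at t)) (at x) = \<dots>" .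
  have xz: "complex_of_real x \<noteq> 0" using x by simp
  have polyT: "poly (Tp \<beta> Q) (complex_of_real x) = complex_of_real x*(complex_of_real x*poly (pderiv (pderiv Q)) (complex_of_real x))
     + (2*\<beta>+1)*(complex_of_real x*poly (pderiv Q) (complex_of_real x)) - 2*(complex_of_real x*(complex_of_real x*poly (pderiv Q) (complex_of_real x)))
     + \<beta>^2*poly Q (complex_of_real x) - (2*\<beta>+1)*(complex_of_real x*poly Q (complex_of_real x))"
    by (simp add: Tp_def algebra_simps)
  show ?thesis
    unfolding bessel_op_def d2' d1[OF x] polyT
    by (rule alg[OF xz, where b=\<beta> and e="Eb \<beta> (complex_of_real x)" and qa="poly Q (complex_of_real x)"
      and qb="poly (pderiv Q) (complex_of_real x)" and qc="poly (pderiv (pderiv Q)) (complex_of_real x)"])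
qed

definition Sp :: "complex \<Rightarrow> complex poly \<Rightarrow> complex poly" where
  "Sp \<beta> Q = - Tp \<beta> Q"

lemma Tp_add: "Tp \<beta> (P + Q) = Tp \<beta> P + Tp \<beta> Q"
  by (rule poly_eqI) (simp add: Tp_def coeff_pderiv coeff_pCons algebra_simps split: nat.split)

lemma Tp_smult: "Tp \<beta> (smult a P) = smult a (Tp \<beta> P)"
  by (rule poly_eqI) (simp add: Tp_def coeff_pderiv coeff_pCons algebra_simps split: nat.split)

lemma Sp_add: "Sp \<beta> (P + Q) = Sp \<beta> P + Sp \<beta> Q"
  by (simp add: Sp_def Tp_add)

lemma Sp_smult: "Sp \<beta> (smult a P) = smult a (Sp \<beta> P)"
  by (simp add: Sp_def Tp_smult)

lemma Spn_add: "(Sp \<beta> ^^ n) (P + Q) = (Sp \<beta> ^^ n) P + (Sp \<beta> ^^ n) Q"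
  by (induction n) (simp_all add: Sp_add)

lemma Spn_smult: "(Sp \<beta> ^^ n) (smult a P) = smult a ((Sp \<beta> ^^ n) P)"
  by (induction n) (simp_all add: Sp_smult)

lemma Spn_Tpn: "(Sp \<beta> ^^ n) Q = smult ((-1)^n) ((Tp \<beta> ^^ n) Q)"
  by (induction n) (simp_all add: Sp_def Tp_smult)

lemma Tp_coeff:
  assumes "degree Q \<le> d"
  shows "degree (Tp \<beta> Q) \<le> Suc d \<and> coeff (Tp \<beta> Q) (Suc d) = - (2 * of_nat d + 2*\<beta> + 1) * coeff Q d"
proof
  have z: "coeff Q k = 0" if "k > d" for k using assms that by (simp add: coeff_eq_0)
  show "degree (Tp \<beta> Q) \<le> Suc d"
  proof (rule degree_le, intro allI impI)
    fix i assume i: "Suc d < i"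
    then obtain m where m: "i = Suc (Suc m)" "d \<le> m" by (cases i; cases "i - 1") auto
    show "coeff (Tp \<beta> Q) i = 0"
      using m z[of "Suc m"] z[of "Suc (Suc m)"] by (simp add: Tp_def coeff_pderiv)
  qed
  show "coeff (Tp \<beta> Q) (Suc d) = - (2 * of_nat d + 2*\<beta> + 1) * coeff Q d"
  proof (cases d)
    case 0 then show ?thesis using z[of 1] by (simp add: Tp_def coeff_pderiv algebra_simps)
  next
    case (Suc m) then show ?thesis using z[of "Suc d"] z[of "Suc (Suc d)"]
      by (simp add: Tp_def coeff_pderiv algebra_simps)
  qed
qed

lemma Tp_0: "poly (Tp \<beta> Q) 0 = \<beta>^2 * poly Q 0"
  by (simp add: Tp_def)

lemma iter:
  "(x::real) > 0 \<Longrightarrow> (bessel_op ^^ n) (\<lambda>t. Eb \<beta> (complex_of_real t) * poly Q (complex_of_real t)) x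
     = Eb \<beta> (complex_of_real x) * poly ((Sp \<beta> ^^ n) Q) (complex_of_real x)"
proof (induction n arbitrary: x)
  case 0 then show ?case by simp
next
  case (Suc n)
  have "(bessel_op ^^ Suc n) (\<lambda>t. Eb \<beta> (complex_of_real t) * poly Q (complex_of_real t)) x
    = bessel_op (\<lambda>t. Eb \<beta> (complex_of_real t) * poly ((Sp \<beta> ^^ n) Q) (complex_of_real t)) x"
    by (simp only: funpow.simps comp_def) (rule bessel_local[OF Suc.IH Suc.prems])
  also have "\<dots> = Eb \<beta> (complex_of_real x) * poly ((Sp \<beta> ^^ Suc n) Q) (complex_of_real x)"
    using bess_H[OF Suc.prems] by (simp add: Sp_def)
  finally show ?case .
qed

lemma polyT_eq:
  "poly (Tp \<beta> P) z = z^2 * poly (pderiv (pderiv P)) z - z * (2*z - 1 - 2*\<beta>) * poly (pderiv P) z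
     - ((2*\<beta>+1) * z - \<beta>^2) * poly P z"
proof -
  have "poly (Tp \<beta> P) z = z*(z*poly (pderiv (pderiv P)) z) + (2*\<beta>+1)*(z*poly (pderiv P) z)
     - 2*(z*(z*poly (pderiv P) z)) + \<beta>^2*poly P z - (2*\<beta>+1)*(z*poly P z)"
    by (simp add: Tp_def algebra_simps)
  then show ?thesis by (simp add: algebra_simps power2_eq_square)
qed

lemma exp_fac:
  assumes "(x::real) > 0"
  shows "exp (complex_of_real x) * complex_of_real x powr (-\<beta>) * Eb \<beta> (complex_of_real x) = 1"
proof -
  have "complex_of_real x powr \<beta> \<noteq> 0" using assms by (simp add: powr_def)
  then show ?thesis by (simp add: Eb_def powr_minus exp_minus field_simps)
qed

lemma pfun_S:
  assumes x: "(x::real) > 0"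
  shows "pfun n \<alpha> x = (-1)^n * poly ((Sp \<alpha> ^^ n) 1) (complex_of_real x)"
proof -
  have g: "(\<lambda>t. exp (- complex_of_real t) * complex_of_real t powr \<alpha>) =
     (\<lambda>t. Eb \<alpha> (complex_of_real t) * poly 1 (complex_of_real t))"
    by (simp add: Eb_def)
  have "pfun n \<alpha> x = (-1)^n * (exp (complex_of_real x) * complex_of_real x powr (-\<alpha>) * Eb \<alpha> (complex_of_real x))
      * poly ((Sp \<alpha> ^^ n) 1) (complex_of_real x)"
    unfolding pfun_def g iter[OF x] by (simp add: ac_simps)
  then show ?thesis using exp_fac[OF x] by simp
qed

lemma pfun_S1:
  assumes x: "(x::real) > 0"
  shows "complex_of_real x * pfun n (\<alpha>+1) x = (-1)^n * poly ((Sp \<alpha> ^^ n) [:0,1:]) (complex_of_real x)"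
proof -
  have g: "exp (- complex_of_real t) * complex_of_real t powr (\<alpha>+1) =
     Eb \<alpha> (complex_of_real t) * poly [:0,1:] (complex_of_real t)" if "t > 0" for t
    using that by (simp add: Eb_def powr_add)
  have xz: "complex_of_real x \<noteq> 0" using x by simp
  have hv: "(bessel_op ^^ n) (\<lambda>t. exp (- complex_of_real t) * complex_of_real t powr (\<alpha>+1)) x
     = Eb \<alpha> (complex_of_real x) * poly ((Sp \<alpha> ^^ n) [:0,1:]) (complex_of_real x)"
    using funpow_local[where f="\<lambda>t. exp (- complex_of_real t) * complex_of_real t powr (\<alpha>+1)"
       and g="\<lambda>t. Eb \<alpha> (complex_of_real t) * poly [:0,1:] (complex_of_real t)", OF g x]
      iter[OF x, of n \<alpha> "[:0,1:]"]
    by (simp only:)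
  have pw: "complex_of_real x powr (-(\<alpha>+1)) = complex_of_real x powr (-\<alpha>) / complex_of_real x"
  proof -
    have "complex_of_real x powr (-(\<alpha>+1)) = complex_of_real x powr (-\<alpha> + -1)" by simp
    also have "\<dots> = complex_of_real x powr (-\<alpha>) * inverse (complex_of_real x powr 1)"
      by (simp only: powr_add powr_minus[of _ 1])
    finally show ?thesis by (simp add: divide_inverse)
  qed
  have "complex_of_real x * pfun n (\<alpha>+1) x = (-1)^n * (exp (complex_of_real x) * complex_of_real x powr (-\<alpha>) * Eb \<alpha> (complex_of_real x))
      * poly ((Sp \<alpha> ^^ n) [:0,1:]) (complex_of_real x)"
    unfolding pfun_def hv pw using xz by (simp add: field_simps)
  then show ?thesis using exp_fac[OF x] by simp
qed

lemma Pn_props: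
  "degree ((Tp \<alpha> ^^ n) 1) \<le> n \<and> coeff ((Tp \<alpha> ^^ n) 1) n = (-2)^n * pochhammer (\<alpha> + 1/2) n
   \<and> poly ((Tp \<alpha> ^^ n) 1) 0 = \<alpha> ^ (2*n)"
proof (induction n)
  case 0 then show ?case by simp
next
  case (Suc n)
  then have d: "degree ((Tp \<alpha> ^^ n) 1) \<le> n" by blast
  note T = Tp_coeff[OF d, of \<alpha>]
  have "coeff ((Tp \<alpha> ^^ Suc n) 1) (Suc n) = - (2 * of_nat n + 2*\<alpha> + 1) * ((-2)^n * pochhammer (\<alpha> + 1/2) n)"
    using T Suc by simp
  also have "\<dots> = (-2)^(Suc n) * pochhammer (\<alpha> + 1/2) (Suc n)"
    by (simp add: pochhammer_rec' algebra_simps)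
  finally show ?case using T Suc by (simp add: Tp_0 power_mult power2_eq_square)
qed

theorem lemma2p1:
  fixes \<alpha> :: complex
  assumes "Re \<alpha> > -1/2"
  shows "\<forall>n::nat.
     (\<exists>P :: complex poly.
        degree P = n
      \<and> (\<forall>x::real. x > 0 \<longrightarrow> pfun n \<alpha> x = poly P (complex_of_real x))
      \<and> poly P 0 = \<alpha> ^ (2*n)
      \<and> (\<exists>a :: complex poly.
            (if n = 0 then a = 0 else degree a \<le> n - 1)
          \<and> P = monom ((-2)^n * pochhammer (\<alpha> + 1/2) n) n + a))
   \<and> (\<forall>x::real. x > 0 \<longrightarrow>
        pfun (Suc n) \<alpha> x =
          (complex_of_real x)^2 * vector_derivative (\<lambda>t. vector_derivative (pfun n \<alpha>) (at t)) (at x)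
          - complex_of_real x * (2 * complex_of_real x - 1 - 2*\<alpha>) * vector_derivative (pfun n \<alpha>) (at x)
          - ((2*\<alpha> + 1) * complex_of_real x - \<alpha>^2) * pfun n \<alpha> x)
   \<and> (\<forall>x::real. x > 0 \<longrightarrow>
        (2*\<alpha> + 1) * complex_of_real x * pfun n (\<alpha> + 1) x = - pfun (Suc n) \<alpha> x + \<alpha>^2 * pfun n \<alpha> x)"
proof (rule allI, intro conjI)
  fix n :: nat
  define P where "P = (Tp \<alpha> ^^ n) 1"
  have m1: "(-1::complex)^n * (-1)^n = 1" by (simp add: power_mult_distrib[symmetric])
  have pP: "pfun n \<alpha> x = poly P (complex_of_real x)" if "x > 0" for x
  proof -
    have "pfun n \<alpha> x = ((-1)^n * (-1)^n) * poly P (complex_of_real x)"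
      using pfun_S[OF that, where n=n and \<alpha>=\<alpha>] by (simp add: Spn_Tpn P_def)
    then show ?thesis using m1 by simp
  qed
  have pS: "pfun (Suc n) \<alpha> x = poly (Tp \<alpha> P) (complex_of_real x)" if "x > 0" for x
  proof -
    have e: "(Sp \<alpha> ^^ Suc n) 1 = smult ((-1)^Suc n) (Tp \<alpha> P)"
      using Spn_Tpn[where \<beta>=\<alpha> and n="Suc n" and Q=1] by (simp only: funpow.simps comp_def P_def)
    have "pfun (Suc n) \<alpha> x = ((-1)^Suc n * (-1)^Suc n) * poly (Tp \<alpha> P) (complex_of_real x)"
      unfolding pfun_S[OF that, where n="Suc n" and \<alpha>=\<alpha>] e by simp
    then show ?thesis by (simp add: power_mult_distrib[symmetric])
  qed
  have props: "degree P \<le> n" "coeff P n = (-2)^n * pochhammer (\<alpha> + 1/2) n" "poly P 0 = \<alpha> ^ (2*n)"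
    using Pn_props[where \<alpha>=\<alpha> and n=n] by (simp_all add: P_def)
  have poch: "pochhammer (\<alpha> + 1/2) n \<noteq> 0"
  proof
    assume "pochhammer (\<alpha> + 1/2) n = 0"
    then obtain k where "\<alpha> + 1/2 = - of_nat k" by (auto simp: pochhammer_eq_0_iff)
    then have "Re (\<alpha> + 1/2) = Re (- of_nat k)" by simp
    then have "Re \<alpha> = -1/2 - real k" by simp
    then show False using assms by simp
  qed
  have degP: "degree P = n"
  proof (rule antisym[OF props(1)])
    show "n \<le> degree P" by (rule le_degree) (simp add: props(2) poch)
  qed
  show "\<exists>P :: complex poly.
        degree P = n
      \<and> (\<forall>x::real. x > 0 \<longrightarrow> pfun n \<alpha> x = poly P (complex_of_real x))
      \<and> poly P 0 = \<alpha> ^ (2*n)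
      \<and> (\<exists>a :: complex poly.
            (if n = 0 then a = 0 else degree a \<le> n - 1)
          \<and> P = monom ((-2)^n * pochhammer (\<alpha> + 1/2) n) n + a)"
  proof (intro exI conjI allI impI)
    show "degree P = n" by (rule degP)
    show "pfun n \<alpha> x = poly P (complex_of_real x)" if "x > 0" for x by (rule pP[OF that])
    show "poly P 0 = \<alpha> ^ (2*n)" by (rule props(3))
    let ?a = "P - monom ((-2)^n * pochhammer (\<alpha> + 1/2) n) n"
    show "P = monom ((-2)^n * pochhammer (\<alpha> + 1/2) n) n + ?a" by simp
    have ca: "coeff ?a i = 0" if "i \<ge> n" for i
    proof (cases "i = n")
      case True then show ?thesis by (simp add: props(2) coeff_monom)
    next
      case False then have "i > n" using that by simp
      then show ?thesis using props(1) by (simp add: coeff_monom coeff_eq_0)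
    qed
    show "if n = 0 then ?a = 0 else degree ?a \<le> n - 1"
    proof (cases "n = 0")
      case True
      then have "?a = 0" using ca by (intro poly_eqI) simp
      then show ?thesis using True by simp
    next
      case False
      have "degree ?a \<le> n - 1" by (rule degree_le) (use ca False in auto)
      then show ?thesis using False by simp
    qed
  qed
  show "\<forall>x::real. x > 0 \<longrightarrow>
        pfun (Suc n) \<alpha> x =
          (complex_of_real x)^2 * vector_derivative (\<lambda>t. vector_derivative (pfun n \<alpha>) (at t)) (at x)
          - complex_of_real x * (2 * complex_of_real x - 1 - 2*\<alpha>) * vector_derivative (pfun n \<alpha>) (at x)
          - ((2*\<alpha> + 1) * complex_of_real x - \<alpha>^2) * pfun n \<alpha> x"
  proof (intro allI impI)
    fix x :: real assume x: "x > 0"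
    have d1: "vector_derivative (pfun n \<alpha>) (at t) = poly (pderiv P) (complex_of_real t)" if "t > 0" for t
    proof -
      have "vector_derivative (pfun n \<alpha>) (at t) = vector_derivative (\<lambda>t. poly P (complex_of_real t)) (at t)"
        by (rule vd_local[OF pP that])
      also have "\<dots> = poly (pderiv P) (complex_of_real t)"
        by (rule vector_derivative_at, rule has_vector_derivative_real_field, rule poly_DERIV)
      finally show ?thesis .
    qed
    have d2: "vector_derivative (\<lambda>t. vector_derivative (pfun n \<alpha>) (at t)) (at x) = poly (pderiv (pderiv P)) (complex_of_real x)"
    proof -
      have "vector_derivative (\<lambda>t. vector_derivative (pfun n \<alpha>) (at t)) (at x) = vector_derivative (\<lambda>t. poly (pderiv P) (complex_of_real t)) (at x)"
        by (rule vd_local[OF d1 x])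
      also have "\<dots> = poly (pderiv (pderiv P)) (complex_of_real x)"
        by (rule vector_derivative_at, rule has_vector_derivative_real_field, rule poly_DERIV)
      finally show ?thesis .
    qed
    show "pfun (Suc n) \<alpha> x =
          (complex_of_real x)^2 * vector_derivative (\<lambda>t. vector_derivative (pfun n \<alpha>) (at t)) (at x)
          - complex_of_real x * (2 * complex_of_real x - 1 - 2*\<alpha>) * vector_derivative (pfun n \<alpha>) (at x)
          - ((2*\<alpha> + 1) * complex_of_real x - \<alpha>^2) * pfun n \<alpha> x"
      unfolding pS[OF x] d2 d1[OF x] pP[OF x] by (rule polyT_eq)
  qed
  show "\<forall>x::real. x > 0 \<longrightarrow>
        (2*\<alpha> + 1) * complex_of_real x * pfun n (\<alpha> + 1) x = - pfun (Suc n) \<alpha> x + \<alpha>^2 * pfun n \<alpha> x"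
  proof (intro allI impI)
    fix x :: real assume x: "x > 0"
    have key: "smult (2*\<alpha>+1) [:0,1:] = Sp \<alpha> 1 + smult (\<alpha>^2) 1"
      by (simp add: Sp_def Tp_def)
    have "(2*\<alpha> + 1) * complex_of_real x * pfun n (\<alpha> + 1) x
        = (-1)^n * poly ((Sp \<alpha> ^^ n) (smult (2*\<alpha>+1) [:0,1:])) (complex_of_real x)"
      unfolding Spn_smult poly_smult mult.assoc pfun_S1[OF x, where n=n and \<alpha>=\<alpha>]
      by (simp only: ac_simps)
    also have "\<dots> = (-1)^n * poly ((Sp \<alpha> ^^ Suc n) 1) (complex_of_real x)
        + \<alpha>^2 * ((-1)^n * poly ((Sp \<alpha> ^^ n) 1) (complex_of_real x))"
      unfolding key Spn_add Spn_smult by (simp add: funpow_Suc_right algebra_simps del: funpow.simps)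
    also have "\<dots> = - pfun (Suc n) \<alpha> x + \<alpha>^2 * pfun n \<alpha> x"
      unfolding pfun_S[OF x] by simp
    finally show "(2*\<alpha> + 1) * complex_of_real x * pfun n (\<alpha> + 1) x = - pfun (Suc n) \<alpha> x + \<alpha>^2 * pfun n \<alpha> x" .
  qed
qed

end
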